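(* Let $\Gamma \rightrightarrows H$ be a VB-groupoid over $G \rightrightarrows M$ with core $C$, and let $\Gamma^* \rightrightarrows C^*$ be its dual VB-groupoid. Let $gr(m_\Gamma)=\{(m_\Gamma(u,v),u,v): u,v \text{ composable}\}\subseteq \Gamma^3$, $gr(m_{\Gamma^*})\subseteq(\Gamma^* )^3$ and $gr(m_{\Gamma\oplus\Gamma^*})\subseteq(\Gamma\oplus\Gamma^* )^3$ be the graphs of the multiplications (subbundles over $gr(m_G)\subseteq G^3$), and let $ann(gr(m_\Gamma))\subseteq(\Gamma^* )^3$ denote the annihilator of $gr(m_\Gamma)$ with respect to the componentwise pairing $\langle(\alpha,\beta,\gamma),(u,v,w)\rangle=\langle\alpha,u\rangle+\langle\beta,v\rangle+\langle\gamma,w\rangle$. Define $\varphi:(\Gamma^* )^3\to(\Gamma^* )^3$, $(\alpha,\beta,\gamma)\mapsto(\alpha,-\beta,-\gamma)$, and $\Phi:(\Gamma\oplus\Gamma^* )^3\to\Gamma^3\oplus(\Gamma^* )^3$, $(u\oplus\alpha,v\oplus\beta,w\oplus\gamma)\mapsto(u,v,w)\oplus(\alpha,-\beta,-\gamma)$. Then: (a) $\varphi(gr(m_{\Gamma^*}))=ann(gr(m_\Gamma))$; (b) $\Phi(gr(m_{\Gamma\oplus\Gamma^*}))=gr(m_\Gamma)\oplus ann(gr(m_\Gamma))$.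
   Context: A VB-groupoid consists of Lie groupoids $\Gamma \rightrightarrows H$, $G\rightrightarrows M$ and vector bundles $\Gamma\to G$, $H\to M$ such that all groupoid structure maps of $\Gamma$ are vector bundle maps covering those of $G$. Its core is the vector bundle $C\to M$ consisting of elements of $\Gamma$ over units $\epsilon_G(m)$ with source $0_m$. The dual $\Gamma^*\to G$ is a VB-groupoid $\Gamma^*\rightrightarrows C^*$ over $G\rightrightarrows M$ whose multiplication is characterized by $\langle m_{\Gamma^*}(\alpha,\beta), m_\Gamma(u,v)\rangle=\langle\alpha,u\rangle+\langle\beta,v\rangle$ for composable pairs over the same composable pair of $G$. The direct sum $\Gamma\oplus\Gamma^*\rightrightarrows H\oplus C^*$ is the direct-sum VB-groupoid over $G\rightrightarrows M$. *)

theory Defs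
  imports Main "HOL-Analysis.Analysis"
begin

text \<open>Algebraic (fiberwise) model of a VB-groupoid.  Smoothness is not modelled;
the statement is a pointwise linear-algebra statement.  Arrows of the base groupoid
are all elements of type 'g, objects all elements of type 'm.  The product g h is
defined iff src g = tgt h.  The fiber of Gamma over g is a finite-dimensional
subspace fib g of a real vector space 'v; an element of Gamma is a pair (g, x) with
x in fib g.  Likewise H has fibers hfib m in 'w.\<close>

record ('g, 'm) groupoid =
  gsrc  :: "'g \<Rightarrow> 'm"
  gtgt  :: "'g \<Rightarrow> 'm"
  gmult :: "'g \<Rightarrow> 'g \<Rightarrow> 'g"
  gunit :: "'m \<Rightarrow> 'g"
  ginv  :: "'g \<Rightarrow> 'g"

record ('g, 'm, 'v, 'w) vbdata =
  fib   :: "'g \<Rightarrow> 'v set"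
  hfib  :: "'m \<Rightarrow> 'w set"
  vsrc  :: "'g \<Rightarrow> 'v \<Rightarrow> 'w"
  vtgt  :: "'g \<Rightarrow> 'v \<Rightarrow> 'w"
  vmult :: "'g \<Rightarrow> 'g \<Rightarrow> 'v \<Rightarrow> 'v \<Rightarrow> 'v"
  vunit :: "'m \<Rightarrow> 'w \<Rightarrow> 'v"
  vinv  :: "'g \<Rightarrow> 'v \<Rightarrow> 'v"

definition lin_on :: "'a::real_vector set \<Rightarrow> ('a \<Rightarrow> 'b::real_vector) \<Rightarrow> bool" where
  "lin_on S f \<longleftrightarrow> (\<forall>x\<in>S. \<forall>y\<in>S. f (x + y) = f x + f y) \<and> (\<forall>a. \<forall>x\<in>S. f (a *\<^sub>R x) = a *\<^sub>R f x)"

definition fin_dim_subspace :: "'a::real_vector set \<Rightarrow> bool" where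
  "fin_dim_subspace S \<longleftrightarrow> subspace S \<and> (\<exists>B. finite B \<and> span B = S)"

definition is_groupoid :: "('g, 'm) groupoid \<Rightarrow> bool" where
  "is_groupoid G \<longleftrightarrow>
    (\<forall>g h. gsrc G g = gtgt G h \<longrightarrow>
        gsrc G (gmult G g h) = gsrc G h \<and> gtgt G (gmult G g h) = gtgt G g) \<and>
    (\<forall>g h k. gsrc G g = gtgt G h \<longrightarrow> gsrc G h = gtgt G k \<longrightarrow>
        gmult G (gmult G g h) k = gmult G g (gmult G h k)) \<and>
    (\<forall>m. gsrc G (gunit G m) = m \<and> gtgt G (gunit G m) = m) \<and>
    (\<forall>g. gmult G (gunit G (gtgt G g)) g = g \<and> gmult G g (gunit G (gsrc G g)) = g) \<and>
    (\<forall>g. gsrc G (ginv G g) = gtgt G g \<and> gtgt G (ginv G g) = gsrc G g \<and>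
         gmult G (ginv G g) g = gunit G (gsrc G g) \<and>
         gmult G g (ginv G g) = gunit G (gtgt G g))"

definition vcomp :: "('g, 'm) groupoid \<Rightarrow> ('g, 'm, 'v::real_vector, 'w::real_vector) vbdata
    \<Rightarrow> 'g \<Rightarrow> 'g \<Rightarrow> 'v \<Rightarrow> 'v \<Rightarrow> bool" where
  "vcomp G V g h x y \<longleftrightarrow> gsrc G g = gtgt G h \<and> x \<in> fib V g \<and> y \<in> fib V h \<and>
     vsrc V g x = vtgt V h y"

definition is_VB_groupoid :: "('g, 'm) groupoid \<Rightarrow> ('g, 'm, 'v::real_vector, 'w::real_vector) vbdata \<Rightarrow> bool" where
  "is_VB_groupoid G V \<longleftrightarrow> is_groupoid G \<and>
    \<comment> \<open>vector bundles Gamma -> G and H -> M (fiberwise)\<close>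
    (\<forall>g. fin_dim_subspace (fib V g)) \<and> (\<forall>m. fin_dim_subspace (hfib V m)) \<and>
    \<comment> \<open>structure maps are fiberwise linear maps covering those of G\<close>
    (\<forall>g. vsrc V g ` fib V g \<subseteq> hfib V (gsrc G g) \<and> lin_on (fib V g) (vsrc V g)) \<and>
    (\<forall>g. vtgt V g ` fib V g \<subseteq> hfib V (gtgt G g) \<and> lin_on (fib V g) (vtgt V g)) \<and>
    (\<forall>m. vunit V m ` hfib V m \<subseteq> fib V (gunit G m) \<and> lin_on (hfib V m) (vunit V m)) \<and>
    (\<forall>g. vinv V g ` fib V g \<subseteq> fib V (ginv G g) \<and> lin_on (fib V g) (vinv V g)) \<and>
    (\<forall>g h x y. vcomp G V g h x y \<longrightarrow> vmult V g h x y \<in> fib V (gmult G g h)) \<and>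
    (\<forall>g h x y x' y'. vcomp G V g h x y \<longrightarrow> vcomp G V g h x' y' \<longrightarrow>
        vmult V g h (x + x') (y + y') = vmult V g h x y + vmult V g h x' y') \<and>
    (\<forall>g h x y a. vcomp G V g h x y \<longrightarrow>
        vmult V g h (a *\<^sub>R x) (a *\<^sub>R y) = a *\<^sub>R vmult V g h x y) \<and>
    \<comment> \<open>the source map Gamma -> H is fiberwise surjective (Gamma -> G xM H onto)\<close>
    (\<forall>g. vsrc V g ` fib V g = hfib V (gsrc G g)) \<and>
    \<comment> \<open>groupoid axioms of Gamma over H\<close>
    (\<forall>g h x y. vcomp G V g h x y \<longrightarrow>
        vsrc V (gmult G g h) (vmult V g h x y) = vsrc V h y \<and>
        vtgt V (gmult G g h) (vmult V g h x y) = vtgt V g x) \<and>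
    (\<forall>g h k x y z. vcomp G V g h x y \<longrightarrow> vcomp G V h k y z \<longrightarrow>
        vmult V (gmult G g h) k (vmult V g h x y) z = vmult V g (gmult G h k) x (vmult V h k y z)) \<and>
    (\<forall>m a. a \<in> hfib V m \<longrightarrow>
        vsrc V (gunit G m) (vunit V m a) = a \<and> vtgt V (gunit G m) (vunit V m a) = a) \<and>
    (\<forall>g x. x \<in> fib V g \<longrightarrow>
        vmult V (gunit G (gtgt G g)) g (vunit V (gtgt G g) (vtgt V g x)) x = x \<and>
        vmult V g (gunit G (gsrc G g)) x (vunit V (gsrc G g) (vsrc V g x)) = x) \<and>
    (\<forall>g x. x \<in> fib V g \<longrightarrow>
        vsrc V (ginv G g) (vinv V g x) = vtgt V g x \<and>
        vtgt V (ginv G g) (vinv V g x) = vsrc V g x \<and>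
        vmult V (ginv G g) g (vinv V g x) x = vunit V (gsrc G g) (vsrc V g x) \<and>
        vmult V g (ginv G g) x (vinv V g x) = vunit V (gtgt G g) (vtgt V g x))"

definition core :: "('g, 'm) groupoid \<Rightarrow> ('g, 'm, 'v::real_vector, 'w::real_vector) vbdata \<Rightarrow> 'm \<Rightarrow> 'v set" where
  "core G V m = {c \<in> fib V (gunit G m). vsrc V (gunit G m) c = 0}"

text \<open>Linear functionals on a subspace S, normalised to vanish outside S (so that
 the dual space of S is represented faithfully).\<close>
definition dualsp :: "'v::real_vector set \<Rightarrow> ('v \<Rightarrow> real) set" where
  "dualsp S = {f. lin_on S f \<and> (\<forall>x. x \<notin> S \<longrightarrow> f x = 0)}"

text \<open>Dual VB-groupoid Gamma* over C*: fibers, source and target (forced by the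
 characterisation of the dual multiplication), and multiplication.  An element of
 Gamma* is a pair (g, alpha) with alpha in dfib g.\<close>
definition dfib :: "('g, 'm, 'v::real_vector, 'w::real_vector) vbdata \<Rightarrow> 'g \<Rightarrow> ('v \<Rightarrow> real) set" where
  "dfib V g = dualsp (fib V g)"

definition dsrc :: "('g, 'm) groupoid \<Rightarrow> ('g, 'm, 'v::real_vector, 'w::real_vector) vbdata
    \<Rightarrow> 'g \<Rightarrow> ('v \<Rightarrow> real) \<Rightarrow> ('v \<Rightarrow> real)" where
  "dsrc G V g \<alpha> = (\<lambda>c. if c \<in> core G V (gsrc G g)
      then - \<alpha> (vmult V g (gunit G (gsrc G g)) 0 (vinv V (gunit G (gsrc G g)) c)) else 0)"

definition dtgt :: "('g, 'm) groupoid \<Rightarrow> ('g, 'm, 'v::real_vector, 'w::real_vector) vbdata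
    \<Rightarrow> 'g \<Rightarrow> ('v \<Rightarrow> real) \<Rightarrow> ('v \<Rightarrow> real)" where
  "dtgt G V h \<beta> = (\<lambda>c. if c \<in> core G V (gtgt G h)
      then \<beta> (vmult V (gunit G (gtgt G h)) h c 0) else 0)"

definition dcomp :: "('g, 'm) groupoid \<Rightarrow> ('g, 'm, 'v::real_vector, 'w::real_vector) vbdata
    \<Rightarrow> 'g \<Rightarrow> 'g \<Rightarrow> ('v \<Rightarrow> real) \<Rightarrow> ('v \<Rightarrow> real) \<Rightarrow> bool" where
  "dcomp G V g h \<alpha> \<beta> \<longleftrightarrow> gsrc G g = gtgt G h \<and> \<alpha> \<in> dfib V g \<and> \<beta> \<in> dfib V h \<and>
     dsrc G V g \<alpha> = dtgt G V h \<beta>"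

definition dmult :: "('g, 'm) groupoid \<Rightarrow> ('g, 'm, 'v::real_vector, 'w::real_vector) vbdata
    \<Rightarrow> 'g \<Rightarrow> 'g \<Rightarrow> ('v \<Rightarrow> real) \<Rightarrow> ('v \<Rightarrow> real) \<Rightarrow> ('v \<Rightarrow> real)" where
  "dmult G V g h \<alpha> \<beta> = (THE \<gamma>. \<gamma> \<in> dfib V (gmult G g h) \<and>
      (\<forall>x y. vcomp G V g h x y \<longrightarrow> \<gamma> (vmult V g h x y) = \<alpha> x + \<beta> y))"

definition gr_G :: "('g, 'm) groupoid \<Rightarrow> ('g \<times> 'g \<times> 'g) set" where
  "gr_G G = {(gmult G g h, g, h) | g h. gsrc G g = gtgt G h}"

definition gr_V :: "('g, 'm) groupoid \<Rightarrow> ('g, 'm, 'v::real_vector, 'w::real_vector) vbdata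
    \<Rightarrow> (('g \<times> 'v) \<times> ('g \<times> 'v) \<times> ('g \<times> 'v)) set" where
  "gr_V G V = {((gmult G g h, vmult V g h x y), (g, x), (h, y)) | g h x y. vcomp G V g h x y}"

definition gr_D :: "('g, 'm) groupoid \<Rightarrow> ('g, 'm, 'v::real_vector, 'w::real_vector) vbdata
    \<Rightarrow> (('g \<times> ('v \<Rightarrow> real)) \<times> ('g \<times> ('v \<Rightarrow> real)) \<times> ('g \<times> ('v \<Rightarrow> real))) set" where
  "gr_D G V = {((gmult G g h, dmult G V g h \<alpha> \<beta>), (g, \<alpha>), (h, \<beta>)) | g h \<alpha> \<beta>. dcomp G V g h \<alpha> \<beta>}"

definition gr_S :: "('g, 'm) groupoid \<Rightarrow> ('g, 'm, 'v::real_vector, 'w::real_vector) vbdata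
    \<Rightarrow> (('g \<times> 'v \<times> ('v \<Rightarrow> real)) \<times> ('g \<times> 'v \<times> ('v \<Rightarrow> real)) \<times> ('g \<times> 'v \<times> ('v \<Rightarrow> real))) set" where
  "gr_S G V = {((gmult G g h, (vmult V g h x y, dmult G V g h \<alpha> \<beta>)), (g, (x, \<alpha>)), (h, (y, \<beta>)))
      | g h x y \<alpha> \<beta>. vcomp G V g h x y \<and> dcomp G V g h \<alpha> \<beta>}"

definition ann :: "('g, 'm, 'v::real_vector, 'w::real_vector) vbdata \<Rightarrow> ('g \<times> 'g \<times> 'g) set
    \<Rightarrow> (('g \<times> 'v) \<times> ('g \<times> 'v) \<times> ('g \<times> 'v)) set
    \<Rightarrow> (('g \<times> ('v \<Rightarrow> real)) \<times> ('g \<times> ('v \<Rightarrow> real)) \<times> ('g \<times> ('v \<Rightarrow> real))) set" where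
  "ann V B S = {((k, \<gamma>), (g, \<alpha>), (h, \<beta>)) | k g h \<gamma> \<alpha> \<beta>. (k, g, h) \<in> B \<and>
      \<gamma> \<in> dfib V k \<and> \<alpha> \<in> dfib V g \<and> \<beta> \<in> dfib V h \<and>
      (\<forall>w u v. ((k, w), (g, u), (h, v)) \<in> S \<longrightarrow> \<gamma> w + \<alpha> u + \<beta> v = 0)}"

definition phi :: "('g \<times> ('v \<Rightarrow> real)) \<times> ('g \<times> ('v \<Rightarrow> real)) \<times> ('g \<times> ('v \<Rightarrow> real))
    \<Rightarrow> ('g \<times> ('v \<Rightarrow> real)) \<times> ('g \<times> ('v \<Rightarrow> real)) \<times> ('g \<times> ('v \<Rightarrow> real))" where
  "phi t = (case t of ((k, \<gamma>), (g, \<alpha>), (h, \<beta>)) \<Rightarrow> ((k, \<gamma>), (g, - \<alpha>), (h, - \<beta>)))"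

definition Phi :: "('g \<times> 'v \<times> ('v \<Rightarrow> real)) \<times> ('g \<times> 'v \<times> ('v \<Rightarrow> real)) \<times> ('g \<times> 'v \<times> ('v \<Rightarrow> real))
    \<Rightarrow> (('g \<times> 'v) \<times> ('g \<times> 'v) \<times> ('g \<times> 'v)) \<times>
       (('g \<times> ('v \<Rightarrow> real)) \<times> ('g \<times> ('v \<Rightarrow> real)) \<times> ('g \<times> ('v \<Rightarrow> real)))" where
  "Phi t = (case t of ((k, (w, \<gamma>)), (g, (u, \<alpha>)), (h, (v, \<beta>))) \<Rightarrow>
      (((k, w), (g, u), (h, v)), ((k, \<gamma>), (g, - \<alpha>), (h, - \<beta>))))"

definition vb_dsum :: "(('g \<times> 'v) \<times> ('g \<times> 'v) \<times> ('g \<times> 'v)) set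
    \<Rightarrow> (('g \<times> 'a) \<times> ('g \<times> 'a) \<times> ('g \<times> 'a)) set
    \<Rightarrow> ((('g \<times> 'v) \<times> ('g \<times> 'v) \<times> ('g \<times> 'v)) \<times> (('g \<times> 'a) \<times> ('g \<times> 'a) \<times> ('g \<times> 'a))) set" where
  "vb_dsum A B = {(((k, w), (g, u), (h, v)), ((k, \<gamma>), (g, \<alpha>), (h, \<beta>))) | k g h w u v \<gamma> \<alpha> \<beta>.
      ((k, w), (g, u), (h, v)) \<in> A \<and> ((k, \<gamma>), (g, \<alpha>), (h, \<beta>)) \<in> B}"

end

theory Submission
  imports Defs
begin

lemma lin_on_0: "lin_on S f \<Longrightarrow> subspace S \<Longrightarrow> f 0 = 0"
proof -
  assume a: "lin_on S f" "subspace S"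
  have "0 \<in> S" using a(2) by (rule subspace_0)
  then have "f (0 *\<^sub>R 0) = 0 *\<^sub>R f 0" using a(1) unfolding lin_on_def by blast
  then show ?thesis by simp
qed

lemma lin_on_add: "lin_on S f \<Longrightarrow> x \<in> S \<Longrightarrow> y \<in> S \<Longrightarrow> f (x + y) = f x + f y"
  unfolding lin_on_def by blast

lemma lin_on_scale: "lin_on S f \<Longrightarrow> x \<in> S \<Longrightarrow> f (a *\<^sub>R x) = a *\<^sub>R f x"
  unfolding lin_on_def by blast

lemma lin_on_neg: "lin_on S f \<Longrightarrow> x \<in> S \<Longrightarrow> f (- x) = - f x"
  using lin_on_scale[of S f x "-1"] by simp

lemma lin_on_diff: "lin_on S f \<Longrightarrow> subspace S \<Longrightarrow> x \<in> S \<Longrightarrow> y \<in> S \<Longrightarrow> f (x - y) = f x - f y"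
proof -
  assume a: "lin_on S f" "subspace S" "x \<in> S" "y \<in> S"
  have "- y \<in> S" using a by (simp add: subspace_neg)
  then have "f (x + - y) = f x + f (- y)" using a lin_on_add by blast
  then show ?thesis using lin_on_neg[OF a(1) a(4)] by simp
qed

lemma dualsp_neg: "a \<in> dualsp S \<Longrightarrow> - a \<in> dualsp S"
  unfolding dualsp_def lin_on_def by (auto simp: algebra_simps)

locale vbg =
  fixes G :: "('g, 'm) groupoid"
    and V :: "('g, 'm, 'v::real_vector, 'w::real_vector) vbdata"
  assumes VB: "is_VB_groupoid G V"
begin

abbreviation "sG \<equiv> gsrc G"
abbreviation "tG \<equiv> gtgt G"
abbreviation "mG \<equiv> gmult G"
abbreviation "uG \<equiv> gunit G"
abbreviation "iG \<equiv> ginv G"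
abbreviation "F \<equiv> fib V"
abbreviation "vs \<equiv> vsrc V"
abbreviation "vt \<equiv> vtgt V"
abbreviation "vm \<equiv> vmult V"
abbreviation "vu \<equiv> vunit V"
abbreviation "vi \<equiv> vinv V"

lemma GR: "is_groupoid G" using VB unfolding is_VB_groupoid_def by meson

lemma g_sm: "sG g = tG h \<Longrightarrow> sG (mG g h) = sG h" using GR unfolding is_groupoid_def by blast
lemma g_tm: "sG g = tG h \<Longrightarrow> tG (mG g h) = tG g" using GR unfolding is_groupoid_def by blast
lemma g_assoc: "sG g = tG h \<Longrightarrow> sG h = tG k \<Longrightarrow> mG (mG g h) k = mG g (mG h k)"
  using GR unfolding is_groupoid_def by blast
lemma g_su[simp]: "sG (uG m) = m" using GR unfolding is_groupoid_def by blast
lemma g_tu[simp]: "tG (uG m) = m" using GR unfolding is_groupoid_def by blast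
lemma g_lu[simp]: "mG (uG (tG g)) g = g" using GR unfolding is_groupoid_def by blast
lemma g_ru[simp]: "mG g (uG (sG g)) = g" using GR unfolding is_groupoid_def by blast
lemma g_si[simp]: "sG (iG g) = tG g" using GR unfolding is_groupoid_def by blast
lemma g_ti[simp]: "tG (iG g) = sG g" using GR unfolding is_groupoid_def by blast
lemma g_il[simp]: "mG (iG g) g = uG (sG g)" using GR unfolding is_groupoid_def by blast
lemma g_ir[simp]: "mG g (iG g) = uG (tG g)" using GR unfolding is_groupoid_def by blast

lemma g_uu[simp]: "mG (uG m) (uG m) = uG m" using g_lu[of "uG m"] by simp
lemma g_iu[simp]: "iG (uG m) = uG m"
proof -
  have "mG (uG (tG (iG (uG m)))) (iG (uG m)) = iG (uG m)" by (rule g_lu)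
  moreover have "tG (iG (uG m)) = m" by simp
  moreover have "mG (uG m) (iG (uG m)) = uG m" using g_ir[of "uG m"] by simp
  ultimately show ?thesis by simp
qed
lemma g_cancel: "sG g = tG h \<Longrightarrow> mG (mG g h) (iG h) = g"
  using g_assoc[of g h "iG h"] g_ru[of g] by simp

lemma fsub: "subspace (F g)"
proof -
  have "\<forall>g. fin_dim_subspace (F g)" using VB unfolding is_VB_groupoid_def by (elim conjE) assumption
  then show ?thesis unfolding fin_dim_subspace_def by blast
qed
lemma hsub: "subspace (hfib V m)"
proof -
  have "\<forall>m. fin_dim_subspace (hfib V m)" using VB unfolding is_VB_groupoid_def by (elim conjE) assumption
  then show ?thesis unfolding fin_dim_subspace_def by blast
qed
lemma f0[simp]: "0 \<in> F g" using fsub by (rule subspace_0)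
lemma fadd: "x \<in> F g \<Longrightarrow> y \<in> F g \<Longrightarrow> x + y \<in> F g" using fsub by (rule subspace_add)
lemma fdiff: "x \<in> F g \<Longrightarrow> y \<in> F g \<Longrightarrow> x - y \<in> F g" using fsub by (rule subspace_diff)
lemma fneg: "x \<in> F g \<Longrightarrow> - x \<in> F g" using fsub by (rule subspace_neg)
lemma fscale: "x \<in> F g \<Longrightarrow> a *\<^sub>R x \<in> F g" using fsub by (rule subspace_scale)

lemma vs_in: "x \<in> F g \<Longrightarrow> vs g x \<in> hfib V (sG g)" using VB unfolding is_VB_groupoid_def by (meson image_subset_iff)
lemma vs_lin: "lin_on (F g) (vs g)" using VB unfolding is_VB_groupoid_def by meson
lemma vt_lin: "lin_on (F g) (vt g)" using VB unfolding is_VB_groupoid_def by meson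
lemma vu_in: "a \<in> hfib V m \<Longrightarrow> vu m a \<in> F (uG m)" using VB unfolding is_VB_groupoid_def by (meson image_subset_iff)
lemma vu_lin: "lin_on (hfib V m) (vu m)" using VB unfolding is_VB_groupoid_def by meson
lemma vi_in: "x \<in> F g \<Longrightarrow> vi g x \<in> F (iG g)" using VB unfolding is_VB_groupoid_def by (meson image_subset_iff)
lemma vi_lin: "lin_on (F g) (vi g)" using VB unfolding is_VB_groupoid_def by meson
lemma vm_in: "vcomp G V g h x y \<Longrightarrow> vm g h x y \<in> F (mG g h)" using VB unfolding is_VB_groupoid_def by meson
lemma vm_add: "vcomp G V g h x y \<Longrightarrow> vcomp G V g h x' y' \<Longrightarrow>
        vm g h (x + x') (y + y') = vm g h x y + vm g h x' y'" using VB unfolding is_VB_groupoid_def by meson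
lemma vm_scale: "vcomp G V g h x y \<Longrightarrow> vm g h (a *\<^sub>R x) (a *\<^sub>R y) = a *\<^sub>R vm g h x y"
  using VB unfolding is_VB_groupoid_def by meson
lemma vs_surj: "vs g ` F g = hfib V (sG g)" using VB unfolding is_VB_groupoid_def by meson
lemma vs_vm: "vcomp G V g h x y \<Longrightarrow> vs (mG g h) (vm g h x y) = vs h y" using VB unfolding is_VB_groupoid_def by meson
lemma vt_vm: "vcomp G V g h x y \<Longrightarrow> vt (mG g h) (vm g h x y) = vt g x" using VB unfolding is_VB_groupoid_def by meson
lemma vm_assoc: "vcomp G V g h x y \<Longrightarrow> vcomp G V h k y z \<Longrightarrow>
        vm (mG g h) k (vm g h x y) z = vm g (mG h k) x (vm h k y z)" using VB unfolding is_VB_groupoid_def by meson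
lemma vm_ru: "x \<in> F g \<Longrightarrow> vm g (uG (sG g)) x (vu (sG g) (vs g x)) = x" using VB unfolding is_VB_groupoid_def by meson
lemma vi_s: "x \<in> F g \<Longrightarrow> vs (iG g) (vi g x) = vt g x" using VB unfolding is_VB_groupoid_def by meson
lemma vi_t: "x \<in> F g \<Longrightarrow> vt (iG g) (vi g x) = vs g x" using VB unfolding is_VB_groupoid_def by meson
lemma vi_l: "x \<in> F g \<Longrightarrow> vm (iG g) g (vi g x) x = vu (sG g) (vs g x)" using VB unfolding is_VB_groupoid_def by meson
lemma vi_r: "x \<in> F g \<Longrightarrow> vm g (iG g) x (vi g x) = vu (tG g) (vt g x)" using VB unfolding is_VB_groupoid_def by meson

lemma vs0[simp]: "vs g 0 = 0" using lin_on_0[OF vs_lin fsub] .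
lemma vt0[simp]: "vt g 0 = 0" using lin_on_0[OF vt_lin fsub] .
lemma vu0[simp]: "vu m 0 = 0" using lin_on_0[OF vu_lin hsub] .
lemma vi0[simp]: "vi g 0 = 0" using lin_on_0[OF vi_lin fsub] .

lemma vcomp0: "sG g = tG h \<Longrightarrow> vcomp G V g h 0 0" unfolding vcomp_def by simp
lemma vm0: "sG g = tG h \<Longrightarrow> vm g h 0 0 = 0"
  using vm_scale[OF vcomp0, of g h 0] by simp


lemma core_prod:
  assumes gh: "sG g = tG h" and c: "c \<in> core G V (sG g)"
  shows "vcomp G V g h (vm g (uG (sG g)) 0 (vi (uG (sG g)) c)) (vm (uG (sG g)) h c 0)"
    and "vm g h (vm g (uG (sG g)) 0 (vi (uG (sG g)) c)) (vm (uG (sG g)) h c 0) = 0"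
proof -
  define u where "u = uG (sG g)"
  define ci where "ci = vi u c"
  have cF: "c \<in> F u" and cs: "vs u c = 0" using c unfolding core_def u_def by auto
  have ciF: "ci \<in> F u" using vi_in[OF cF] unfolding ci_def u_def by simp
  have cis: "vs u ci = vt u c" using vi_s[OF cF] unfolding ci_def u_def by simp
  have cit: "vt u ci = 0" using vi_t[OF cF] cs unfolding ci_def u_def by simp
  have c1: "vcomp G V g u 0 ci" using ciF cit by (simp add: vcomp_def u_def)
  have c2: "vcomp G V u h c 0" using cF cs gh by (simp add: vcomp_def u_def)
  define a where "a = vm g u 0 ci"
  define b where "b = vm u h c 0"
  have gu: "mG g u = g" unfolding u_def by simp
  have uh: "mG u h = h" unfolding u_def using gh g_lu[of h] by simp
  have aF: "a \<in> F g" using vm_in[OF c1] gu unfolding a_def by simp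
  have as: "vs g a = vt u c" using vs_vm[OF c1] cis gu unfolding a_def by simp
  have bF: "b \<in> F h" using vm_in[OF c2] uh unfolding b_def by simp
  have bt: "vt h b = vt u c" using vt_vm[OF c2] uh unfolding b_def by simp
  have c3: "vcomp G V g h a b" using gh aF bF as bt by (simp add: vcomp_def)
  have c4: "vcomp G V u h ci b" using gh ciF bF cis bt by (simp add: vcomp_def u_def)
  have "vm (mG g u) h (vm g u 0 ci) b = vm g (mG u h) 0 (vm u h ci b)" by (rule vm_assoc[OF c1 c4])
  hence e1: "vm g h a b = vm g h 0 (vm u h ci b)" using gu uh unfolding a_def by simp
  have c5: "vcomp G V u u ci c" using ciF cF cis by (simp add: vcomp_def u_def)
  have e2: "vm (mG u u) h (vm u u ci c) 0 = vm u (mG u h) ci (vm u h c 0)" by (rule vm_assoc[OF c5 c2])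
  have "vm (iG u) u (vi u c) c = vu (sG u) (vs u c)" by (rule vi_l[OF cF])
  hence e3: "vm u u ci c = 0" using cs unfolding ci_def u_def by simp
  have uu: "mG u u = u" unfolding u_def by simp
  have "vm u h ci b = 0" using e2 e3 uu uh vm0[of u h] gh unfolding b_def by (simp add: u_def)
  hence "vm g h a b = 0" using e1 vm0[OF gh] by simp
  then show "vcomp G V g h (vm g (uG (sG g)) 0 (vi (uG (sG g)) c)) (vm (uG (sG g)) h c 0)"
    and "vm g h (vm g (uG (sG g)) 0 (vi (uG (sG g)) c)) (vm (uG (sG g)) h c 0) = 0"
    using c3 unfolding a_def b_def ci_def u_def by auto
qed

lemma rcancel:
  assumes c1: "vcomp G V g h a y" and c2: "vcomp G V g h x y" and e: "vm g h a y = vm g h x y"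
  shows "a = x"
proof -
  have gh: "sG g = tG h" and yF: "y \<in> F h" using c1 unfolding vcomp_def by auto
  define yi where "yi = vi h y"
  have yiF: "yi \<in> F (iG h)" using vi_in[OF yF] unfolding yi_def .
  have c3: "vcomp G V h (iG h) y yi" using yF yiF vi_t[OF yF] by (simp add: vcomp_def yi_def)
  have key: "z = vm (mG g h) (iG h) (vm g h z y) yi" if cz: "vcomp G V g h z y" for z
  proof -
    have zF: "z \<in> F g" and zs: "vs g z = vt h y" using cz unfolding vcomp_def by auto
    have "vm (mG g h) (iG h) (vm g h z y) yi = vm g (mG h (iG h)) z (vm h (iG h) y yi)"
      by (rule vm_assoc[OF cz c3])
    also have "\<dots> = vm g (uG (sG g)) z (vu (sG g) (vs g z))"
      using vi_r[OF yF] gh zs by (simp add: yi_def)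
    also have "\<dots> = z" by (rule vm_ru[OF zF])
    finally show ?thesis by simp
  qed
  show ?thesis using key[OF c1] key[OF c2] e by simp
qed

lemma zero_prod:
  assumes c: "vcomp G V g h x y" and z: "vm g h x y = 0"
  shows "\<exists>c\<in>core G V (sG g). x = vm g (uG (sG g)) 0 (vi (uG (sG g)) c) \<and> y = vm (uG (sG g)) h c 0"
proof -
  have gh: "sG g = tG h" and yF: "y \<in> F h" and xF: "x \<in> F g" using c unfolding vcomp_def by auto
  have ys: "vs h y = 0" using vs_vm[OF c] z by simp
  define n where "n = iG h"
  have c1: "vcomp G V h n y 0" using yF ys by (simp add: vcomp_def n_def)
  define cc where "cc = vm h n y 0"
  have hn: "mG h n = uG (sG g)" using gh by (simp add: n_def)
  have ccF: "cc \<in> F (uG (sG g))" using vm_in[OF c1] hn unfolding cc_def by simp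
  have ccs: "vs (uG (sG g)) cc = 0" using vs_vm[OF c1] hn unfolding cc_def by simp
  have ccC: "cc \<in> core G V (sG g)" using ccF ccs unfolding core_def by simp
  have c2: "vcomp G V n h 0 0" by (rule vcomp0) (simp add: n_def)
  have "vm (mG h n) h (vm h n y 0) 0 = vm h (mG n h) y (vm n h 0 0)" by (rule vm_assoc[OF c1 c2])
  hence "vm (uG (sG g)) h cc 0 = vm h (uG (sG h)) y (vu (sG h) (vs h y))"
    using hn vm0[of n h] ys unfolding cc_def by (simp add: n_def)
  hence ye: "y = vm (uG (sG g)) h cc 0" using vm_ru[OF yF] by simp
  have cp: "vcomp G V g h (vm g (uG (sG g)) 0 (vi (uG (sG g)) cc)) y"
    and cz: "vm g h (vm g (uG (sG g)) 0 (vi (uG (sG g)) cc)) y = 0"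
    using core_prod[OF gh ccC] ye by auto
  have "vm g (uG (sG g)) 0 (vi (uG (sG g)) cc) = x" by (rule rcancel[OF cp c]) (simp add: cz z)
  then show ?thesis using ccC ye by metis
qed


lemma dcomp_core:
  assumes d: "dcomp G V g h \<alpha> \<beta>" and c: "c \<in> core G V (sG g)"
  shows "\<alpha> (vm g (uG (sG g)) 0 (vi (uG (sG g)) c)) + \<beta> (vm (uG (sG g)) h c 0) = 0"
proof -
  have gh: "sG g = tG h" and e: "dsrc G V g \<alpha> = dtgt G V h \<beta>" using d unfolding dcomp_def by auto
  have "dsrc G V g \<alpha> c = dtgt G V h \<beta> c" using e by simp
  then show ?thesis using c gh[symmetric] by (simp add: dsrc_def dtgt_def)
qed

lemma zero_pair:
  assumes c: "vcomp G V g h x y" and z: "vm g h x y = 0" and d: "dcomp G V g h \<alpha> \<beta>"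
  shows "\<alpha> x + \<beta> y = 0"
  using zero_prod[OF c z] dcomp_core[OF d] by auto

lemma vcomp_add: "vcomp G V g h x y \<Longrightarrow> vcomp G V g h x' y' \<Longrightarrow> vcomp G V g h (x + x') (y + y')"
  unfolding vcomp_def using fadd lin_on_add[OF vs_lin] lin_on_add[OF vt_lin] by auto

lemma vcomp_scale: "vcomp G V g h x y \<Longrightarrow> vcomp G V g h (a *\<^sub>R x) (a *\<^sub>R y)"
  unfolding vcomp_def using fscale lin_on_scale[OF vs_lin] lin_on_scale[OF vt_lin] by auto

lemma vcomp_diff: "vcomp G V g h x y \<Longrightarrow> vcomp G V g h x' y' \<Longrightarrow> vcomp G V g h (x - x') (y - y')"
  unfolding vcomp_def using fdiff lin_on_diff[OF vs_lin fsub] lin_on_diff[OF vt_lin fsub] by auto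

lemma vm_diff:
  assumes c1: "vcomp G V g h x y" and c2: "vcomp G V g h x' y'"
  shows "vm g h (x - x') (y - y') = vm g h x y - vm g h x' y'"
proof -
  have c3: "vcomp G V g h ((-1) *\<^sub>R x') ((-1) *\<^sub>R y')" by (rule vcomp_scale[OF c2])
  have "vm g h (x + (-1) *\<^sub>R x') (y + (-1) *\<^sub>R y') = vm g h x y + vm g h ((-1) *\<^sub>R x') ((-1) *\<^sub>R y')"
    by (rule vm_add[OF c1 c3])
  then show ?thesis using vm_scale[OF c2, of "-1"] by simp
qed

lemma surj_prod:
  assumes gh: "sG g = tG h" and w: "w \<in> F (mG g h)"
  shows "\<exists>x y. vcomp G V g h x y \<and> w = vm g h x y"
proof -
  have "vs (mG g h) w \<in> hfib V (sG h)" using vs_in[OF w] g_sm[OF gh] by simp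
  then obtain v where vF: "v \<in> F h" and vs: "vs h v = vs (mG g h) w" using vs_surj[of h] by force
  define n where "n = iG h"
  define vv where "vv = vi h v"
  have vvF: "vv \<in> F n" using vi_in[OF vF] unfolding vv_def n_def .
  have c1: "vcomp G V (mG g h) n w vv" using g_sm[OF gh] w vvF vi_t[OF vF] vs
    by (simp add: vcomp_def n_def vv_def)
  define x where "x = vm (mG g h) n w vv"
  have ghn: "mG (mG g h) n = g" unfolding n_def by (rule g_cancel[OF gh])
  have xF: "x \<in> F g" using vm_in[OF c1] ghn unfolding x_def by simp
  have xs: "vs g x = vt h v" using vs_vm[OF c1] ghn vi_s[OF vF] unfolding x_def by (simp add: n_def vv_def)
  have c2: "vcomp G V g h x v" using gh xF vF xs by (simp add: vcomp_def)
  have c3: "vcomp G V n h vv v" using vvF vF vi_s[OF vF] by (simp add: vcomp_def n_def vv_def)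
  have "vm (mG (mG g h) n) h (vm (mG g h) n w vv) v = vm (mG g h) (mG n h) w (vm n h vv v)"
    by (rule vm_assoc[OF c1 c3])
  also have "\<dots> = vm (mG g h) (uG (sG (mG g h))) w (vu (sG (mG g h)) (vs (mG g h) w))"
    using vi_l[OF vF] g_sm[OF gh] vs by (simp add: n_def vv_def)
  also have "\<dots> = w" by (rule vm_ru[OF w])
  finally have "vm g h x v = w" using ghn unfolding x_def by simp
  then show ?thesis using c2 by metis
qed

lemma dfib_lin: "\<alpha> \<in> dfib V g \<Longrightarrow> lin_on (F g) \<alpha>"
  unfolding dfib_def dualsp_def by simp
lemma dfib_out: "\<alpha> \<in> dfib V g \<Longrightarrow> x \<notin> F g \<Longrightarrow> \<alpha> x = 0"
  unfolding dfib_def dualsp_def by simp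

lemma dfib_unique:
  assumes gh: "sG g = tG h" and g1: "\<gamma>1 \<in> dfib V (mG g h)" and g2: "\<gamma>2 \<in> dfib V (mG g h)"
    and e: "\<And>x y. vcomp G V g h x y \<Longrightarrow> \<gamma>1 (vm g h x y) = \<gamma>2 (vm g h x y)"
  shows "\<gamma>1 = \<gamma>2"
proof
  fix w show "\<gamma>1 w = \<gamma>2 w"
  proof (cases "w \<in> F (mG g h)")
    case True
    then obtain x y where "vcomp G V g h x y" "w = vm g h x y" using surj_prod[OF gh] by blast
    then show ?thesis using e by simp
  next
    case False
    then show ?thesis using dfib_out[OF g1] dfib_out[OF g2] by simp
  qed
qed

lemma dmult_spec:
  assumes d: "dcomp G V g h \<alpha> \<beta>"
  shows "dmult G V g h \<alpha> \<beta> \<in> dfib V (mG g h) \<and>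
    (\<forall>x y. vcomp G V g h x y \<longrightarrow> dmult G V g h \<alpha> \<beta> (vm g h x y) = \<alpha> x + \<beta> y)"
proof -
  have gh: "sG g = tG h" and aD: "\<alpha> \<in> dfib V g" and bD: "\<beta> \<in> dfib V h" using d unfolding dcomp_def by auto
  have al: "lin_on (F g) \<alpha>" and bl: "lin_on (F h) \<beta>" using aD bD by (auto intro: dfib_lin)
  define P where "P = (\<lambda>\<gamma>. \<gamma> \<in> dfib V (mG g h) \<and>
      (\<forall>x y. vcomp G V g h x y \<longrightarrow> \<gamma> (vm g h x y) = \<alpha> x + \<beta> y))"
  define pick where "pick = (\<lambda>w. SOME p. vcomp G V g h (fst p) (snd p) \<and> w = vm g h (fst p) (snd p))"
  have pk: "vcomp G V g h (fst (pick w)) (snd (pick w)) \<and> w = vm g h (fst (pick w)) (snd (pick w))"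
    if wF0: "w \<in> F (mG g h)" for w
  proof -
    obtain x y where "vcomp G V g h x y \<and> w = vm g h x y" using surj_prod[OF gh wF0] by blast
    then have "\<exists>p. vcomp G V g h (fst p) (snd p) \<and> w = vm g h (fst p) (snd p)" by (metis fst_conv snd_conv)
    then show ?thesis unfolding pick_def by (rule someI_ex)
  qed
  define \<gamma> where "\<gamma> = (\<lambda>w. if w \<in> F (mG g h) then \<alpha> (fst (pick w)) + \<beta> (snd (pick w)) else 0)"
  have main: "\<gamma> (vm g h x y) = \<alpha> x + \<beta> y" if c: "vcomp G V g h x y" for x y
  proof -
    define w where "w = vm g h x y"
    have wF: "w \<in> F (mG g h)" using vm_in[OF c] unfolding w_def .
    define x' where "x' = fst (pick w)"
    define y' where "y' = snd (pick w)"
    have c': "vcomp G V g h x' y'" and we: "w = vm g h x' y'" using pk[OF wF] unfolding x'_def y'_def by auto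
    have "vm g h (x - x') (y - y') = 0" using vm_diff[OF c c'] we unfolding w_def by simp
    then have "\<alpha> (x - x') + \<beta> (y - y') = 0" using zero_pair[OF vcomp_diff[OF c c'] _ d] by simp
    moreover have "\<alpha> (x - x') = \<alpha> x - \<alpha> x'" using c c' lin_on_diff[OF al fsub] unfolding vcomp_def by auto
    moreover have "\<beta> (y - y') = \<beta> y - \<beta> y'" using c c' lin_on_diff[OF bl fsub] unfolding vcomp_def by auto
    ultimately have "\<alpha> x + \<beta> y = \<alpha> x' + \<beta> y'" by simp
    then show ?thesis using wF unfolding \<gamma>_def x'_def y'_def w_def[symmetric] by simp
  qed
  have lin: "lin_on (F (mG g h)) \<gamma>"
    unfolding lin_on_def
  proof (intro conjI ballI allI)
    fix w1 w2 assume w1: "w1 \<in> F (mG g h)" and w2: "w2 \<in> F (mG g h)"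
    obtain x1 y1 where c1: "vcomp G V g h x1 y1" and e1: "w1 = vm g h x1 y1" using surj_prod[OF gh w1] by blast
    obtain x2 y2 where c2: "vcomp G V g h x2 y2" and e2: "w2 = vm g h x2 y2" using surj_prod[OF gh w2] by blast
    have "w1 + w2 = vm g h (x1 + x2) (y1 + y2)" using vm_add[OF c1 c2] e1 e2 by simp
    then have "\<gamma> (w1 + w2) = \<alpha> (x1 + x2) + \<beta> (y1 + y2)" using main[OF vcomp_add[OF c1 c2]] by simp
    also have "\<dots> = (\<alpha> x1 + \<beta> y1) + (\<alpha> x2 + \<beta> y2)"
      using c1 c2 lin_on_add[OF al] lin_on_add[OF bl] unfolding vcomp_def by auto
    finally show "\<gamma> (w1 + w2) = \<gamma> w1 + \<gamma> w2" using main[OF c1] main[OF c2] e1 e2 by simp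
  next
    fix a w assume w: "w \<in> F (mG g h)"
    obtain x y where c1: "vcomp G V g h x y" and e1: "w = vm g h x y" using surj_prod[OF gh w] by blast
    have "a *\<^sub>R w = vm g h (a *\<^sub>R x) (a *\<^sub>R y)" using vm_scale[OF c1] e1 by simp
    then have "\<gamma> (a *\<^sub>R w) = \<alpha> (a *\<^sub>R x) + \<beta> (a *\<^sub>R y)" using main[OF vcomp_scale[OF c1]] by simp
    also have "\<dots> = a *\<^sub>R (\<alpha> x + \<beta> y)"
      using c1 lin_on_scale[OF al] lin_on_scale[OF bl] unfolding vcomp_def by (auto simp: algebra_simps)
    finally show "\<gamma> (a *\<^sub>R w) = a *\<^sub>R \<gamma> w" using main[OF c1] e1 by simp
  qed
  have "P \<gamma>" unfolding P_def dfib_def dualsp_def using lin main by (auto simp: \<gamma>_def)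
  moreover have "\<gamma>' = \<gamma>" if "P \<gamma>'" for \<gamma>'
    using dfib_unique[OF gh, of \<gamma>' \<gamma>] that \<open>P \<gamma>\<close> unfolding P_def by auto
  ultimately have "\<exists>!\<gamma>. P \<gamma>" by blast
  then have "P (THE \<gamma>. P \<gamma>)" by (rule theI')
  then show ?thesis unfolding P_def dmult_def by simp
qed


lemma dfib_neg: "\<alpha> \<in> dfib V g \<Longrightarrow> - \<alpha> \<in> dfib V g"
  unfolding dfib_def by (rule dualsp_neg)

lemma dfib_0: "\<gamma> \<in> dfib V g \<Longrightarrow> \<gamma> 0 = 0"
  using lin_on_0[OF dfib_lin fsub] by blast

lemma grV_iff: "((k, w), (g, u), (h, v)) \<in> gr_V G V \<longleftrightarrow> vcomp G V g h u v \<and> k = mG g h \<and> w = vm g h u v"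
  unfolding gr_V_def by blast

lemma grG_iff: "(k, g, h) \<in> gr_G G \<longleftrightarrow> sG g = tG h \<and> k = mG g h"
  unfolding gr_G_def by blast

lemma ann_iff: "((k, \<gamma>), (g, \<alpha>), (h, \<beta>)) \<in> ann V (gr_G G) (gr_V G V) \<longleftrightarrow>
   sG g = tG h \<and> k = mG g h \<and> \<gamma> \<in> dfib V k \<and> \<alpha> \<in> dfib V g \<and> \<beta> \<in> dfib V h \<and>
   (\<forall>u v. vcomp G V g h u v \<longrightarrow> \<gamma> (vm g h u v) + \<alpha> u + \<beta> v = 0)"
  unfolding ann_def by (auto simp: grV_iff grG_iff)

lemma part_a: "phi ` gr_D G V = ann V (gr_G G) (gr_V G V)"
proof
  show "phi ` gr_D G V \<subseteq> ann V (gr_G G) (gr_V G V)"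
  proof
    fix t assume "t \<in> phi ` gr_D G V"
    then obtain g h \<alpha> \<beta> where d: "dcomp G V g h \<alpha> \<beta>"
      and t: "t = ((mG g h, dmult G V g h \<alpha> \<beta>), (g, - \<alpha>), (h, - \<beta>))"
      unfolding gr_D_def phi_def by auto
    have gh: "sG g = tG h" and aD: "\<alpha> \<in> dfib V g" and bD: "\<beta> \<in> dfib V h" using d unfolding dcomp_def by auto
    show "t \<in> ann V (gr_G G) (gr_V G V)" unfolding t ann_iff
      using gh dfib_neg[OF aD] dfib_neg[OF bD] dmult_spec[OF d] by auto
  qed
next
  show "ann V (gr_G G) (gr_V G V) \<subseteq> phi ` gr_D G V"
  proof
    fix t assume "t \<in> ann V (gr_G G) (gr_V G V)"
    then obtain k g h \<gamma> \<alpha> \<beta> where t: "t = ((k, \<gamma>), (g, \<alpha>), (h, \<beta>))"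
      and A: "((k, \<gamma>), (g, \<alpha>), (h, \<beta>)) \<in> ann V (gr_G G) (gr_V G V)"
      unfolding ann_def by blast
    have gh: "sG g = tG h" and k: "k = mG g h" and cD: "\<gamma> \<in> dfib V k" and aD: "\<alpha> \<in> dfib V g"
      and bD: "\<beta> \<in> dfib V h" and an: "\<And>u v. vcomp G V g h u v \<Longrightarrow> \<gamma> (vm g h u v) + \<alpha> u + \<beta> v = 0"
      using A unfolding ann_iff by auto
    have ds: "dsrc G V g (- \<alpha>) = dtgt G V h (- \<beta>)"
    proof
      fix c
      show "dsrc G V g (- \<alpha>) c = dtgt G V h (- \<beta>) c"
      proof (cases "c \<in> core G V (sG g)")
        case True
        note cp = core_prod[OF gh True]
        have "\<gamma> 0 = 0" using dfib_0[OF cD] .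
        then have "\<alpha> (vm g (uG (sG g)) 0 (vi (uG (sG g)) c)) + \<beta> (vm (uG (sG g)) h c 0) = 0"
          using an[OF cp(1)] cp(2) by simp
        then show ?thesis using True gh[symmetric] by (simp add: dsrc_def dtgt_def)
      next
        case False
        then show ?thesis using gh[symmetric] by (simp add: dsrc_def dtgt_def)
      qed
    qed
    have d: "dcomp G V g h (- \<alpha>) (- \<beta>)" using gh ds dfib_neg[OF aD] dfib_neg[OF bD] by (simp add: dcomp_def)
    have dm: "dmult G V g h (- \<alpha>) (- \<beta>) = \<gamma>"
    proof (rule dfib_unique[OF gh])
      show "dmult G V g h (- \<alpha>) (- \<beta>) \<in> dfib V (mG g h)" using dmult_spec[OF d] by blast
      show "\<gamma> \<in> dfib V (mG g h)" using cD k by simp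
      fix x y assume c: "vcomp G V g h x y"
      have "dmult G V g h (- \<alpha>) (- \<beta>) (vm g h x y) = (- \<alpha>) x + (- \<beta>) y"
        using dmult_spec[OF d] c by blast
      then show "dmult G V g h (- \<alpha>) (- \<beta>) (vm g h x y) = \<gamma> (vm g h x y)"
        using an[OF c] by (simp add: algebra_simps)
    qed
    have "t = phi ((mG g h, dmult G V g h (- \<alpha>) (- \<beta>)), (g, - \<alpha>), (h, - \<beta>))"
      using t k dm by (simp add: phi_def fun_eq_iff)
    moreover have "((mG g h, dmult G V g h (- \<alpha>) (- \<beta>)), (g, - \<alpha>), (h, - \<beta>)) \<in> gr_D G V"
      using d unfolding gr_D_def by blast
    ultimately show "t \<in> phi ` gr_D G V" by blast
  qed
qed

lemma part_b: "Phi ` gr_S G V = vb_dsum (gr_V G V) (ann V (gr_G G) (gr_V G V))"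
proof
  show "Phi ` gr_S G V \<subseteq> vb_dsum (gr_V G V) (ann V (gr_G G) (gr_V G V))"
  proof
    fix t assume "t \<in> Phi ` gr_S G V"
    then obtain g h x y \<alpha> \<beta> where c: "vcomp G V g h x y" and d: "dcomp G V g h \<alpha> \<beta>"
      and t: "t = (((mG g h, vm g h x y), (g, x), (h, y)), ((mG g h, dmult G V g h \<alpha> \<beta>), (g, - \<alpha>), (h, - \<beta>)))"
      unfolding gr_S_def Phi_def by auto
    have "((mG g h, dmult G V g h \<alpha> \<beta>), (g, - \<alpha>), (h, - \<beta>)) \<in> phi ` gr_D G V"
    proof
      show "((mG g h, dmult G V g h \<alpha> \<beta>), (g, - \<alpha>), (h, - \<beta>)) = phi ((mG g h, dmult G V g h \<alpha> \<beta>), (g, \<alpha>), (h, \<beta>))"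
        by (simp add: phi_def)
      show "((mG g h, dmult G V g h \<alpha> \<beta>), (g, \<alpha>), (h, \<beta>)) \<in> gr_D G V" using d unfolding gr_D_def by blast
    qed
    then have A: "((mG g h, dmult G V g h \<alpha> \<beta>), (g, - \<alpha>), (h, - \<beta>)) \<in> ann V (gr_G G) (gr_V G V)"
      using part_a by simp
    have B: "((mG g h, vm g h x y), (g, x), (h, y)) \<in> gr_V G V" using c by (simp add: grV_iff)
    show "t \<in> vb_dsum (gr_V G V) (ann V (gr_G G) (gr_V G V))"
      unfolding t vb_dsum_def using A B by blast
  qed
next
  show "vb_dsum (gr_V G V) (ann V (gr_G G) (gr_V G V)) \<subseteq> Phi ` gr_S G V"
  proof
    fix t assume "t \<in> vb_dsum (gr_V G V) (ann V (gr_G G) (gr_V G V))"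
    then obtain k g h w u v \<gamma> \<alpha> \<beta> where
      t: "t = (((k, w), (g, u), (h, v)), ((k, \<gamma>), (g, \<alpha>), (h, \<beta>)))"
      and B: "((k, w), (g, u), (h, v)) \<in> gr_V G V"
      and A: "((k, \<gamma>), (g, \<alpha>), (h, \<beta>)) \<in> phi ` gr_D G V"
      unfolding vb_dsum_def part_a[symmetric] by blast
    have c: "vcomp G V g h u v" and k: "k = mG g h" and w: "w = vm g h u v" using B by (auto simp: grV_iff)
    from A obtain g' h' \<alpha>' \<beta>' where d: "dcomp G V g' h' \<alpha>' \<beta>'"
      and e: "((k, \<gamma>), (g, \<alpha>), (h, \<beta>)) = ((mG g' h', dmult G V g' h' \<alpha>' \<beta>'), (g', - \<alpha>'), (h', - \<beta>'))"
      unfolding gr_D_def phi_def by auto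
    have e2: "g' = g" "h' = h" "\<gamma> = dmult G V g h \<alpha>' \<beta>'" "\<alpha> = - \<alpha>'" "\<beta> = - \<beta>'" using e by auto
    have d': "dcomp G V g h \<alpha>' \<beta>'" using d e2 by simp
    have "t = Phi ((mG g h, (vm g h u v, dmult G V g h \<alpha>' \<beta>')), (g, (u, \<alpha>')), (h, (v, \<beta>')))"
      using t k w e2 by (simp add: Phi_def)
    moreover have "((mG g h, (vm g h u v, dmult G V g h \<alpha>' \<beta>')), (g, (u, \<alpha>')), (h, (v, \<beta>'))) \<in> gr_S G V"
      using c d' unfolding gr_S_def by blast
    ultimately show "t \<in> Phi ` gr_S G V" by blast
  qed
qed

end

theorem proposition3p2:
  fixes G :: "('g, 'm) groupoid"
    and V :: "('g, 'm, 'v::real_vector, 'w::real_vector) vbdata"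
  assumes "is_VB_groupoid G V"
  shows "phi ` gr_D G V = ann V (gr_G G) (gr_V G V) \<and>
         Phi ` gr_S G V = vb_dsum (gr_V G V) (ann V (gr_G G) (gr_V G V))"
proof -
  interpret vbg G V by unfold_locales (rule assms)
  show ?thesis using part_a part_b by blast
qed

end
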